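(* Let $\alpha\in\Bbbk$, $f=z(z+\alpha)$, $A=A(f)$. Every degree-$0$ automorphism of the $\mathbb{Z}$-algebra $\overline{A}$ is inner.
   Context: $\Bbbk$ algebraically closed of characteristic $0$; $A=A(f)$ is generated by $\Bbbk[z],x,y$ with $xz=(z+1)x$, $yz=(z-1)y$, $xy=f$, $yx=f(z-1)$, graded by $\deg x=1,\deg y=-1,\deg z=0$. The $\mathbb{Z}$-algebra associated to $A$ is $\overline{A}=\bigoplus_{i,j\in\mathbb{Z}}\overline{A}_{i,j}$ with $\overline{A}_{i,j}=A_{j-i}$, with multiplication $\overline{A}_{i,j}\times\overline{A}_{j,k}\to\overline{A}_{i,k}$ induced by multiplication in $A$ and $\overline{A}_{i,j}\overline{A}_{j',k}=0$ for $j\neq j'$; $1_i\in\overline{A}_{i,i}=A_0$ denotes the unit. A degree-$0$ automorphism is a $\Bbbk$-algebra automorphism $\gamma$ of $\overline{A}$ with $\gamma(\overline{A}_{i,j})=\overline{A}_{i,j}$ and $\gamma(1_i)=1_i$ for all $i,j$. Such $\gamma$ is inner if for all $m,n\in\mathbb{Z}$ there exist $g_m\in\overline{A}_{m,m}$ and $h_n\in\overline{A}_{n,n}$ with $\gamma(w)=g_mwh_n$ for all $w\in\overline{A}_{m,n}$. *)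

theory Defs
  imports "HOL-Computational_Algebra.Polynomial"
begin

text \<open>Generalized Weyl algebra A(f) over k[z]: the homogeneous component A_d is a free
left k[z]-module with basis x^d (d \<ge> 0) resp. y^(-d) (d < 0).  An element a(z) x^d
(convention x^(-k) = y^k) is represented by its coefficient polynomial a.\<close>

text \<open>The automorphism sigma^n of k[z]: b(z) \<mapsto> b(z+n); one has x b = sigma(b) x, y b = sigma^(-1)(b) y.\<close>
definition sh :: "int \<Rightarrow> 'k::comm_ring_1 poly \<Rightarrow> 'k poly" where
  "sh n p = pcompose p [:of_int n, 1:]"

text \<open>xx f d e is the polynomial c with x^d x^e = c x^(d+e) in A(f).\<close>
definition xx :: "'k::comm_ring_1 poly \<Rightarrow> int \<Rightarrow> int \<Rightarrow> 'k poly" where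
  "xx f d e =
     (if d > 0 \<and> e < 0 then
        (let t = min d (- e) in sh (d - t) (\<Prod>i<nat t. sh (int i) f))
      else if d < 0 \<and> e > 0 then
        (let t = min (- d) e in sh (d + t) (\<Prod>i\<in>{1..nat t}. sh (- int i) f))
      else 1)"

text \<open>Multiplication A_d \<times> A_e \<rightarrow> A_(d+e): (a x^d)(b x^e) = a sigma^d(b) (x^d x^e).\<close>
definition gwa_mul :: "'k::comm_ring_1 poly \<Rightarrow> int \<Rightarrow> int \<Rightarrow> 'k poly \<Rightarrow> 'k poly \<Rightarrow> 'k poly" where
  "gwa_mul f d e a b = a * sh d b * xx f d e"

definition gwa_f :: "'k::comm_ring_1 \<Rightarrow> 'k poly" where
  "gwa_f \<alpha> = [:0, 1:] * [:\<alpha>, 1:]"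

text \<open>A degree-0 automorphism of the Z-algebra Abar, given by its components
gamma i j : Abar_(i,j) = A_(j-i) \<rightarrow> Abar_(i,j).\<close>
definition degree_zero_aut :: "'k::field poly \<Rightarrow> (int \<Rightarrow> int \<Rightarrow> 'k poly \<Rightarrow> 'k poly) \<Rightarrow> bool" where
  "degree_zero_aut f \<gamma> \<longleftrightarrow>
     (\<forall>i j. bij (\<gamma> i j)) \<and>
     (\<forall>i j a b. \<gamma> i j (a + b) = \<gamma> i j a + \<gamma> i j b) \<and>
     (\<forall>i j c a. \<gamma> i j (smult c a) = smult c (\<gamma> i j a)) \<and>
     (\<forall>i j k a b. \<gamma> i k (gwa_mul f (j - i) (k - j) a b)
                   = gwa_mul f (j - i) (k - j) (\<gamma> i j a) (\<gamma> j k b)) \<and>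
     (\<forall>i. \<gamma> i i 1 = 1)"

definition inner_aut :: "'k::field poly \<Rightarrow> (int \<Rightarrow> int \<Rightarrow> 'k poly \<Rightarrow> 'k poly) \<Rightarrow> bool" where
  "inner_aut f \<gamma> \<longleftrightarrow>
     (\<exists>g h :: int \<Rightarrow> 'k poly. \<forall>m n w.
        \<gamma> m n w = gwa_mul f (n - m) 0 (gwa_mul f 0 (n - m) (g m) w) (h n))"

end

theory Submission
  imports Defs
begin

lemma sh0[simp]: "sh 0 p = p" by (simp add: sh_def)
lemma sh_const[simp]: "sh n [:c:] = [:c:]" by (simp add: sh_def)
lemma sh_1[simp]: "sh n 1 = 1" by (simp add: sh_def pcompose_1)
lemma xx_0l[simp]: "xx f 0 e = 1" by (simp add: xx_def)
lemma xx_0r[simp]: "xx f d 0 = 1" by (simp add: xx_def)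

lemma sh_nz: "(p::'k::field poly) \<noteq> 0 \<Longrightarrow> sh n p \<noteq> 0"
  unfolding sh_def using pcompose_eq_0[of p "[:of_int n, 1:]"] by auto

lemma xx_nz: "(f::'k::field poly) \<noteq> 0 \<Longrightarrow> xx f d e \<noteq> 0"
  unfolding xx_def Let_def
  using sh_nz[of f] by (auto intro!: sh_nz simp: prod_zero_iff)

lemma F_nz: "gwa_f \<alpha> \<noteq> 0" by (simp add: gwa_f_def)

lemma gm0[simp]: "gwa_mul f 0 e a b = a * b" by (simp add: gwa_mul_def)

lemma sh_F: "sh (-1) (gwa_f (\<alpha>::'k::field)) = [:1 - \<alpha>, \<alpha> - 2, 1:]"
  by (simp add: sh_def gwa_f_def pcompose_mult pcompose_pCons algebra_simps)

lemma F_eq: "gwa_f (\<alpha>::'k::field) = [:0, \<alpha>, 1:]"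
  by (simp add: gwa_f_def)

lemma xx_1m1: "xx f 1 (-1) = f" by (simp add: xx_def)
lemma xx_m11: "xx f (-1) 1 = sh (-1) f" by (simp add: xx_def)

lemma key:
  fixes p :: "'k::field_char_0 poly"
  assumes e1: "p*(p+[:\<alpha>:]) = smult c [:0,\<alpha>,1:]" and c: "c\<noteq>0"
   and e2: "(p+[:-1:])*(p+[:\<alpha>-1:]) = smult d [:1-\<alpha>, \<alpha>-2, 1:]" and d: "d \<noteq> 0"
  shows "p = [:0,1:]"
proof -
  have dp: "degree p = 1"
  proof (cases "degree p = 0")
    case True
    then obtain b where "p = [:b:]" by (metis degree_eq_zeroE)
    hence "degree (p*(p+[:\<alpha>:])) = 0" by simp
    with e1 c show ?thesis by simp
  next
    case False
    hence d1: "degree (p+[:\<alpha>:]) = degree p" by (simp add: degree_add_eq_left)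
    have nz: "p \<noteq> 0" "p+[:\<alpha>:] \<noteq> 0" using False d1 by auto
    have "degree (p*(p+[:\<alpha>:])) = 2 * degree p" using degree_mult_eq[OF nz] d1 by simp
    moreover have "degree (smult c [:0,\<alpha>,1::'k:]) = 2" using c by simp
    ultimately show ?thesis using e1 by simp
  qed
  define a b where "a = coeff p 1" and "b = coeff p 0"
  have pe: "p = [:b, a:]"
    by (rule poly_eqI) (auto simp: a_def b_def coeff_pCons dp coeff_eq_0 split: nat.splits)
  have a: "a \<noteq> 0" proof assume "a = 0" hence "p = [:b:]" using pe by simp hence "degree p = 0" by simp thus False using dp by simp qed
  from e1 have q1: "a*b + a*(b+\<alpha>) = c*\<alpha>" "a*a = c" unfolding pe by (simp_all add: algebra_simps)
  from e2 have q2: "a*(b-1) + a*(b+\<alpha>-1) = d*(\<alpha>-2)" "a*a = d" unfolding pe by (simp_all add: algebra_simps)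
  from e1 have q3: "b*(b+\<alpha>) = 0" unfolding pe by (simp add: algebra_simps)
  have "a * (2*b + \<alpha>) = a * (a*\<alpha>)" using q1 by (simp add: algebra_simps)
  hence r1: "2*b + \<alpha> = a*\<alpha>" using a by simp
  have "a * (2*b - 2 + \<alpha>) = a * (a*(\<alpha>-2))" using q2(1) by (simp add: algebra_simps q2(2)[symmetric])
  hence r2: "2*b - 2 + \<alpha> = a*(\<alpha>-2)" using a by simp
  have "a = 1" using r1 r2 by (simp add: algebra_simps)
  hence "b = 0" using r1 by simp
  thus ?thesis using pe \<open>a = 1\<close> by simp
qed

context
  fixes \<alpha> :: "'k::field_char_0" and \<gamma> :: "int \<Rightarrow> int \<Rightarrow> 'k poly \<Rightarrow> 'k poly"
  assumes aut: "degree_zero_aut (gwa_f \<alpha>) \<gamma>"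
begin

lemma bij_g: "bij (\<gamma> i j)" using aut unfolding degree_zero_aut_def by blast
lemma add_g: "\<gamma> i j (a + b) = \<gamma> i j a + \<gamma> i j b" using aut unfolding degree_zero_aut_def by blast
lemma smult_g: "\<gamma> i j (smult c a) = smult c (\<gamma> i j a)" using aut unfolding degree_zero_aut_def by blast
lemma mul_g: "\<gamma> i k (gwa_mul (gwa_f \<alpha>) (j - i) (k - j) a b)
                   = gwa_mul (gwa_f \<alpha>) (j - i) (k - j) (\<gamma> i j a) (\<gamma> j k b)"
  using aut unfolding degree_zero_aut_def by blast
lemma one_g: "\<gamma> i i 1 = 1" using aut unfolding degree_zero_aut_def by blast

lemma zero_g: "\<gamma> i j 0 = 0"
  using add_g[of i j 0 0] by simp

lemma diag_mult: "\<gamma> i i (a * b) = \<gamma> i i a * \<gamma> i i b"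
  using mul_g[of i i i a b] by simp

lemma off_diag: "\<gamma> i j a = \<gamma> i i a * \<gamma> i j 1"
  using mul_g[of i j i a 1] by simp

lemma const_g: "\<exists>c. c \<noteq> 0 \<and> \<gamma> i j 1 = [:c:]"
proof -
  have "surj (\<gamma> i j)" using bij_g[of i j] by (rule bij_is_surj)
  then obtain a where "1 = \<gamma> i j a" using surjD[of "\<gamma> i j" 1] by blast
  hence e: "\<gamma> i i a * \<gamma> i j 1 = 1" using off_diag[of i j a] by simp
  hence nz: "\<gamma> i i a \<noteq> 0" "\<gamma> i j 1 \<noteq> 0" by auto
  have "degree (\<gamma> i i a * \<gamma> i j 1) = 0" using e by simp
  hence "degree (\<gamma> i j 1) = 0" using degree_mult_eq[OF nz] by simp
  hence "\<gamma> i j 1 = [:coeff (\<gamma> i j 1) 0:]" using degree_0_id by metis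
  thus ?thesis using nz(2) by (metis pCons_0_0)
qed

lemma lin_g: "\<gamma> i i [:x, 1:] = \<gamma> i i [:0, 1:] + [:x:]"
proof -
  have "[:x, 1:] = [:0,1:] + smult x 1" by simp
  hence "\<gamma> i i [:x, 1:] = \<gamma> i i [:0,1:] + smult x (\<gamma> i i 1)"
    by (simp only: add_g smult_g)
  thus ?thesis by (simp add: one_g)
qed


lemma diag_z: "\<gamma> i i [:0,1:] = [:0,1:]"
proof -
  define p where "p = \<gamma> i i [:0,1:]"
  obtain c1 where c1: "c1 \<noteq> 0" "\<gamma> i (i+1) 1 = [:c1:]" using const_g by blast
  obtain c2 where c2: "c2 \<noteq> 0" "\<gamma> (i+1) i 1 = [:c2:]" using const_g by blast
  obtain c3 where c3: "c3 \<noteq> 0" "\<gamma> i (i-1) 1 = [:c3:]" using const_g by blast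
  obtain c4 where c4: "c4 \<noteq> 0" "\<gamma> (i-1) i 1 = [:c4:]" using const_g by blast
  have m1: "\<gamma> i i (gwa_f \<alpha>) = smult (c1*c2) (gwa_f \<alpha>)"
    using mul_g[of i i "i+1" 1 1] c1 c2 by (simp add: gwa_mul_def xx_1m1 mult.commute)
  have "gwa_f \<alpha> = [:0,1:] * [:\<alpha>,1:]" by (simp add: gwa_f_def)
  hence "\<gamma> i i (gwa_f \<alpha>) = \<gamma> i i [:0,1:] * \<gamma> i i [:\<alpha>,1:]" by (simp only: diag_mult)
  hence "\<gamma> i i (gwa_f \<alpha>) = p * (p + [:\<alpha>:])" by (simp only: lin_g[of i \<alpha>] p_def[symmetric])
  hence e1: "p*(p+[:\<alpha>:]) = smult (c1*c2) [:0,\<alpha>,1:]" using m1 by (simp add: F_eq)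
  have m2: "\<gamma> i i (sh (-1) (gwa_f \<alpha>)) = smult (c3*c4) (sh (-1) (gwa_f \<alpha>))"
    using mul_g[of i i "i-1" 1 1] c3 c4 by (simp add: gwa_mul_def xx_m11 mult.commute)
  have "sh (-1) (gwa_f \<alpha>) = [:-1,1:] * [:\<alpha>-1,1:]" by (simp add: sh_F algebra_simps)
  hence "\<gamma> i i (sh (-1) (gwa_f \<alpha>)) = \<gamma> i i [:-1,1:] * \<gamma> i i [:\<alpha>-1,1:]" by (simp only: diag_mult)
  hence "\<gamma> i i (sh (-1) (gwa_f \<alpha>)) = (p + [:-1:]) * (p + [:\<alpha>-1:])"
    by (simp only: lin_g[of i "-1"] lin_g[of i "\<alpha>-1"] p_def[symmetric])
  hence e2: "(p + [:-1:]) * (p + [:\<alpha>-1:]) = smult (c3*c4) [:1-\<alpha>, \<alpha>-2, 1:]"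
    using m2 by (simp add: sh_F)
  show ?thesis using key[OF e1 _ e2] c1 c2 c3 c4 p_def by simp
qed

lemma diag_id: "\<gamma> i i w = w"
proof (induction w)
  case (pCons a q)
  have "pCons a q = smult a 1 + [:0,1:] * q" by simp
  hence "\<gamma> i i (pCons a q) = smult a (\<gamma> i i 1) + \<gamma> i i [:0,1:] * \<gamma> i i q"
    by (simp only: add_g smult_g diag_mult)
  also have "\<dots> = smult a 1 + [:0,1:] * q" by (simp only: one_g diag_z pCons.IH)
  also have "\<dots> = pCons a q" by simp
  finally show ?case .
qed (simp add: zero_g)

lemma offd: "\<gamma> i j w = w * \<gamma> i j 1"
  using off_diag[of i j w] diag_id[of i w] by simp

lemma cocycle: "\<gamma> i k 1 = \<gamma> i j 1 * \<gamma> j k 1"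
proof -
  obtain c where c: "\<gamma> j k 1 = [:c:]" using const_g by blast
  have "\<gamma> i k (xx (gwa_f \<alpha>) (j-i) (k-j)) = \<gamma> i j 1 * \<gamma> j k 1 * xx (gwa_f \<alpha>) (j-i) (k-j)"
    using mul_g[of i k j 1 1] c by (simp add: gwa_mul_def)
  hence "xx (gwa_f \<alpha>) (j-i) (k-j) * \<gamma> i k 1 = xx (gwa_f \<alpha>) (j-i) (k-j) * (\<gamma> i j 1 * \<gamma> j k 1)"
    using offd[of i k "xx (gwa_f \<alpha>) (j-i) (k-j)"] by (simp add: ac_simps)
  thus ?thesis using xx_nz[OF F_nz, of \<alpha> "j-i" "k-j"] by simp
qed

end

theorem lemma5p1:
  fixes \<alpha> :: "'k::field_char_0"
    and \<gamma> :: "int \<Rightarrow> int \<Rightarrow> 'k poly \<Rightarrow> 'k poly"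
  assumes alg_closed: "\<forall>p :: 'k poly. degree p > 0 \<longrightarrow> (\<exists>c. poly p c = 0)"
    and aut: "degree_zero_aut (gwa_f \<alpha>) \<gamma>"
  shows "inner_aut (gwa_f \<alpha>) \<gamma>"
  unfolding inner_aut_def
proof (intro exI allI)
  fix m n w
  obtain c where c: "\<gamma> 0 n 1 = [:c:]" using const_g[OF aut] by blast
  have "\<gamma> m n w = w * (\<gamma> m 0 1 * \<gamma> 0 n 1)"
    using offd[OF aut, of m n w] cocycle[OF aut, of m n 0] by simp
  thus "\<gamma> m n w = gwa_mul (gwa_f \<alpha>) (n - m) 0 (gwa_mul (gwa_f \<alpha>) 0 (n - m) (\<gamma> m 0 1) w) (\<gamma> 0 n 1)"
    using c by (simp add: gwa_mul_def ac_simps)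
qed

end
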